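(* Let $K$ be a field and $(Q,f,g,c,W)$ as in the setting below, with completed Jacobian algebra $\Lambda$, and assume that either $Q$ satisfies $(\star)$, or $Q$ satisfies $(\diamond)$ and $\prod_{\alpha\in\Omega}c_\alpha\neq1$ for $\Omega$ a set of representatives of the $g$-orbits. Then for every $i\in Q_0$ and every $\alpha\in Q_1$ we have $\alpha\cdot z_i=0$ and $z_i\cdot\alpha=0$ in $\Lambda$.
   Context: Setting: $Q$ is a finite quiver with vertex set $Q_0$ and arrow set $Q_1$, connected, without loops or $2$-cycles, every vertex being the source of exactly two arrows and the target of exactly two arrows, equipped with bijections $f,g:Q_1\to Q_1$ such that for each $\alpha$, $\{f(\alpha),g(\alpha)\}$ is the set of the two arrows starting at the target of $\alpha$, and $f^3=\mathrm{id}$. $n_\alpha$ is the size of the $g$-orbit of $\alpha$. $c:Q_1\to K^\times$ is constant on $g$-orbits. Paths compose left to right. $W=\sum_\alpha \alpha\cdot f(\alpha)\cdot f^2(\alpha)-\sum_\beta c_\beta\,\beta\cdot g(\beta)\cdots g^{n_\beta-1}(\beta)$ (sums over representatives of $f$-orbits, resp. $g$-orbits). $\Lambda$ is the completed Jacobian algebra of $(Q,W)$. For $i\in Q_0$, $z_i$ is the image in $\Lambda$ of $\alpha\cdot f(\alpha)\cdot f^2(\alpha)$ for an arrow $\alpha$ starting at $i$ (independent of the choice of $\alpha$ in $\Lambda$). $(\star)$: for every $\alpha$, $n_\alpha\ge4$ or $n_{f(\alpha)}\ge4$. $(\diamond)$: $n_\alpha=3$ for all $\alpha$. *)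

theory Defs
  imports Main
begin

(* Quiver: vertices = UNIV :: 'v, arrows = UNIV :: 'a, source s, target t.
   A path is a pair (v, as): v the starting vertex, as a list of arrows
   composed left to right. (v, []) is the trivial path e_v. *)

definition valid_path :: "('a \<Rightarrow> 'v) \<Rightarrow> ('a \<Rightarrow> 'v) \<Rightarrow> 'v \<times> 'a list \<Rightarrow> bool" where
  "valid_path s t p = (case p of (v, as) \<Rightarrow>
      (as = [] \<or> (s (hd as) = v \<and> successively (\<lambda>a b. t a = s b) as)))"

definition path_end :: "('a \<Rightarrow> 'v) \<Rightarrow> 'v \<times> 'a list \<Rightarrow> 'v" where
  "path_end t p = (case p of (v, as) \<Rightarrow> if as = [] then v else t (last as))"

(* elements of the completed path algebra K<<Q>>: arbitrary (formal, possibly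
   infinite) K-linear combinations of paths, i.e. functions paths => K vanishing
   off valid paths *)
definition is_series :: "('a \<Rightarrow> 'v) \<Rightarrow> ('a \<Rightarrow> 'v) \<Rightarrow> ('v \<times> 'a list \<Rightarrow> 'k::field) \<Rightarrow> bool" where
  "is_series s t x = (\<forall>p. \<not> valid_path s t p \<longrightarrow> x p = 0)"

definition ser_mult :: "('a \<Rightarrow> 'v) \<Rightarrow> ('a \<Rightarrow> 'v) \<Rightarrow> ('v \<times> 'a list \<Rightarrow> 'k::field)
     \<Rightarrow> ('v \<times> 'a list \<Rightarrow> 'k) \<Rightarrow> ('v \<times> 'a list \<Rightarrow> 'k)" where
  "ser_mult s t x y = (\<lambda>(v, as). if valid_path s t (v, as) then
      (\<Sum>k\<le>length as. x (v, take k as) * y (path_end t (v, take k as), drop k as))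
    else 0)"

definition path_ser :: "'v \<times> 'a list \<Rightarrow> ('v \<times> 'a list \<Rightarrow> 'k::field)" where
  "path_ser p = (\<lambda>q. if q = p then 1 else 0)"

definition arrows_path :: "('a \<Rightarrow> 'v) \<Rightarrow> 'a list \<Rightarrow> 'v \<times> 'a list" where
  "arrows_path s as = (s (hd as), as)"

(* cyclic derivative of a potential W (a series supported on cycles) w.r.t. the
   arrow gam: for a cycle a_1...a_n, d_gam(a_1...a_n) = sum over k with a_k = gam
   of a_{k+1}...a_n a_1...a_{k-1}.  The coefficient of a path q from t gam to
   s gam in d_gam W is the sum of the coefficients of W at the rotations of gam q. *)
definition cyc_deriv :: "('a \<Rightarrow> 'v) \<Rightarrow> ('a \<Rightarrow> 'v) \<Rightarrow> ('v \<times> 'a list \<Rightarrow> 'k::field)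
     \<Rightarrow> 'a \<Rightarrow> ('v \<times> 'a list \<Rightarrow> 'k)" where
  "cyc_deriv s t W gam = (\<lambda>(v, as).
     if valid_path s t (v, as) \<and> v = t gam \<and> path_end t (v, as) = s gam
     then (\<Sum>j<Suc (length as). W (arrows_path s (rotate j (gam # as))))
     else 0)"

definition jac_ideal :: "('a \<Rightarrow> 'v) \<Rightarrow> ('a \<Rightarrow> 'v) \<Rightarrow> ('v \<times> 'a list \<Rightarrow> 'k::field)
     \<Rightarrow> ('v \<times> 'a list \<Rightarrow> 'k) \<Rightarrow> bool" where
  "jac_ideal s t W x = (\<exists>L :: (('v \<times> 'a list \<Rightarrow> 'k) \<times> 'a \<times> ('v \<times> 'a list \<Rightarrow> 'k)) list.
      (\<forall>(a, gam, b) \<in> set L. is_series s t a \<and> is_series s t b) \<and>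
      x = (\<lambda>p. \<Sum>(a, gam, b) \<leftarrow> L. ser_mult s t (ser_mult s t a (cyc_deriv s t W gam)) b p))"

(* closure of that ideal in the arrow-ideal-adic topology of K<<Q>>:
   x lies in  J + m^N  for every N, where m^N consists of the series supported
   on paths of length >= N.  x lies in this closure iff x = 0 in the completed
   Jacobian algebra Lambda = K<<Q>> / closure(J). *)
definition zero_in_jacobian :: "('a \<Rightarrow> 'v) \<Rightarrow> ('a \<Rightarrow> 'v) \<Rightarrow> ('v \<times> 'a list \<Rightarrow> 'k::field)
     \<Rightarrow> ('v \<times> 'a list \<Rightarrow> 'k) \<Rightarrow> bool" where
  "zero_in_jacobian s t W x = (\<forall>N::nat. \<exists>y. jac_ideal s t W y \<and>
      (\<forall>p. length (snd p) < N \<longrightarrow> x p = y p))"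

definition orbit_of :: "('a \<Rightarrow> 'a) \<Rightarrow> 'a \<Rightarrow> 'a set" where
  "orbit_of h a = {(h ^^ k) a | k. True}"

definition orb_size :: "('a \<Rightarrow> 'a) \<Rightarrow> 'a \<Rightarrow> nat" where
  "orb_size g a = card (orbit_of g a)"

definition orbit_reps :: "('a \<Rightarrow> 'a) \<Rightarrow> 'a set \<Rightarrow> bool" where
  "orbit_reps h R = (\<forall>a. \<exists>!r. r \<in> R \<and> r \<in> orbit_of h a)"

definition potential :: "('a \<Rightarrow> 'v) \<Rightarrow> ('a \<Rightarrow> 'a) \<Rightarrow> ('a \<Rightarrow> 'a) \<Rightarrow> ('a \<Rightarrow> 'k::field)
     \<Rightarrow> 'a set \<Rightarrow> 'a set \<Rightarrow> ('v \<times> 'a list \<Rightarrow> 'k)" where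
  "potential s f g c Rf Rg = (\<lambda>p.
      (\<Sum>a\<in>Rf. path_ser (arrows_path s [a, f a, f (f a)]) p)
    - (\<Sum>b\<in>Rg. c b * path_ser (arrows_path s (map (\<lambda>k. (g ^^ k) b) [0..<orb_size g b])) p))"

definition quiver_setting :: "('a::finite \<Rightarrow> 'v::finite) \<Rightarrow> ('a \<Rightarrow> 'v) \<Rightarrow> ('a \<Rightarrow> 'a) \<Rightarrow> ('a \<Rightarrow> 'a)
     \<Rightarrow> ('a \<Rightarrow> 'k::field) \<Rightarrow> bool" where
  "quiver_setting s t f g c = (
      (\<forall>v w. (v, w) \<in> ({(s a, t a) | a. True} \<union> {(t a, s a) | a. True})\<^sup>*) \<and>
      (\<forall>a. s a \<noteq> t a) \<and>
      (\<forall>a b. \<not> (s a = t b \<and> t a = s b)) \<and>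
      (\<forall>v. card {a. s a = v} = 2) \<and>
      (\<forall>v. card {a. t a = v} = 2) \<and>
      bij f \<and> bij g \<and>
      (\<forall>a. {f a, g a} = {b. s b = t a}) \<and>
      f ^^ 3 = id \<and>
      (\<forall>a. c a \<noteq> 0) \<and>
      (\<forall>a b. b \<in> orbit_of g a \<longrightarrow> c b = c a))"

end

theory Submission
  imports Defs
begin

lemma valid_concat:
  assumes "valid_path s t (v, U)" "valid_path s t (w, V)" "path_end t (v, U) = w"
  shows "valid_path s t (v, U @ V)"
  using assms by (auto simp: valid_path_def path_end_def successively_append_iff hd_append split: if_splits)

lemma ser_mult_path_ser:
  assumes vP: "valid_path s t P" and vQ: "valid_path s t Q" and e: "path_end t P = fst Q"
  shows "ser_mult s t (path_ser P) (path_ser Q) = (path_ser (fst P, snd P @ snd Q) :: _ \<Rightarrow> 'k::field)"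
proof (rule ext, clarify)
  fix w as
  obtain v U where P: "P = (v, U)" by (cases P)
  obtain v' V where Q: "Q = (v', V)" by (cases Q)
  have e': "path_end t (v, U) = v'" using e P Q by simp
  show "ser_mult s t (path_ser P) (path_ser Q) (w, as) = (path_ser (fst P, snd P @ snd Q) :: _ \<Rightarrow> 'k) (w, as)"
  proof (cases "(w, as) = (v, U @ V)")
    case True
    have val: "valid_path s t (v, U @ V)" using valid_concat[of s t v U v' V] vP vQ e' P Q by simp
    have "(\<Sum>k\<le>length as. (path_ser P (w, take k as) :: 'k) * path_ser Q (path_end t (w, take k as), drop k as))
        = (\<Sum>k\<le>length as. if k = length U then 1 else 0)"
    proof (intro sum.cong refl)
      fix k assume k: "k \<in> {..length as}"
      show "(path_ser P (w, take k as) :: 'k) * path_ser Q (path_end t (w, take k as), drop k as) = (if k = length U then 1 else 0)"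
      proof (cases "k = length U")
        case True
        then show ?thesis using \<open>(w, as) = (v, U @ V)\<close> e' by (simp add: path_ser_def P Q)
      next
        case False
        have "take k as \<noteq> U" using False k by (metis atMost_iff length_take min_absorb2)
        then show ?thesis using False by (simp add: path_ser_def P)
      qed
    qed
    also have "\<dots> = 1" using True by simp
    finally show ?thesis using True val P Q by (simp add: ser_mult_def path_ser_def)
  next
    case False
    have "(\<Sum>k\<le>length as. (path_ser P (w, take k as) :: 'k) * path_ser Q (path_end t (w, take k as), drop k as)) = 0"
    proof (intro sum.neutral ballI)
      fix k assume "k \<in> {..length as}"
      show "(path_ser P (w, take k as) :: 'k) * path_ser Q (path_end t (w, take k as), drop k as) = 0"
      proof (rule ccontr)
        assume "\<not> ?thesis"
        then have "(w, take k as) = (v, U)" "drop k as = V" by (auto simp: path_ser_def P Q split: if_splits)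
        then have "(w, as) = (v, U @ V)" by (metis append_take_drop_id prod.inject)
        with False show False by simp
      qed
    qed
    moreover have "(path_ser (fst P, snd P @ snd Q) :: _ \<Rightarrow> 'k) (w, as) = 0"
      using False P Q by (simp add: path_ser_def)
    ultimately show ?thesis by (simp add: ser_mult_def)
  qed
qed

lemma ser_mult_lin2:
  "ser_mult s t x (\<lambda>p. y1 p - (k::'k::field) * y2 p) = (\<lambda>p. ser_mult s t x y1 p - k * ser_mult s t x y2 p)"
  by (rule ext) (auto simp: ser_mult_def sum_subtractf sum_distrib_left algebra_simps)

lemma ser_mult_lin1:
  "ser_mult s t (\<lambda>p. y1 p - (k::'k::field) * y2 p) x = (\<lambda>p. ser_mult s t y1 x p - k * ser_mult s t y2 x p)"
  by (rule ext) (auto simp: ser_mult_def sum_subtractf sum_distrib_left algebra_simps)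

lemma ser_mult_scal1:
  "ser_mult s t (\<lambda>p. (k::'k::field) * y p) x = (\<lambda>p. k * ser_mult s t y x p)"
  by (rule ext) (auto simp: ser_mult_def sum_distrib_left algebra_simps)

lemma orbit_period:
  fixes g :: "'a::finite \<Rightarrow> 'a"
  assumes "inj g"
  shows "0 < orb_size g a \<and> (g ^^ orb_size g a) a = a \<and>
    (\<forall>i j. i < orb_size g a \<longrightarrow> j < orb_size g a \<longrightarrow> (g ^^ i) a = (g ^^ j) a \<longrightarrow> i = j) \<and>
    orbit_of g a = (\<lambda>k. (g ^^ k) a) ` {..<orb_size g a}"
proof -
  obtain n0 where n0: "n0 > 0" "(g ^^ n0) a = a"
    using funpow_inj_finite[OF assms, of a] by auto
  define m where "m = (LEAST n. n > 0 \<and> (g ^^ n) a = a)"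
  have m: "m > 0" "(g ^^ m) a = a"
    using LeastI[of "\<lambda>n. n > 0 \<and> (g ^^ n) a = a" n0] n0 unfolding m_def by auto
  have mmin: "\<And>k. 0 < k \<Longrightarrow> k < m \<Longrightarrow> (g ^^ k) a \<noteq> a"
    unfolding m_def using not_less_Least by blast
  have dist: "(g ^^ i) a = (g ^^ j) a \<Longrightarrow> i < m \<Longrightarrow> j < m \<Longrightarrow> i = j" for i j
  proof (rule ccontr)
    assume eq: "(g ^^ i) a = (g ^^ j) a" and im: "i < m" and jm: "j < m" and ne: "i \<noteq> j"
    have "\<exists>i j. i < j \<and> j < m \<and> (g ^^ i) a = (g ^^ j) a"
      using eq im jm ne by (metis linorder_neqE_nat)
    then obtain i' j' where ij: "i' < j'" "j' < m" "(g ^^ i') a = (g ^^ j') a" by blast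
    have "(g ^^ i') ((g ^^ (j' - i')) a) = (g ^^ i') a"
      using ij by (metis add_diff_inverse_nat funpow_add less_imp_not_less o_apply)
    then have "(g ^^ (j' - i')) a = a" using inj_fn[OF assms, of i'] by (meson injD)
    with mmin[of "j' - i'"] ij show False by linarith
  qed
  have orb: "orbit_of g a = (\<lambda>k. (g ^^ k) a) ` {..<m}"
  proof
    show "orbit_of g a \<subseteq> (\<lambda>k. (g ^^ k) a) ` {..<m}"
    proof
      fix x assume "x \<in> orbit_of g a"
      then obtain k where "x = (g ^^ k) a" by (auto simp: orbit_of_def)
      then have "x = (g ^^ (k mod m)) a" using funpow_mod_eq[where f=g and n=m and x=a and m=k] m by simp
      then show "x \<in> (\<lambda>k. (g ^^ k) a) ` {..<m}" using m by auto
    qed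
  qed (auto simp: orbit_of_def)
  have "card (orbit_of g a) = m"
    unfolding orb by (subst card_image) (auto intro!: inj_onI dist)
  then show ?thesis using m dist orb unfolding orb_size_def by auto
qed

lemma orbit_same:
  fixes h :: "'a::finite \<Rightarrow> 'a"
  assumes "inj h" "b \<in> orbit_of h a"
  shows "orbit_of h b = orbit_of h a"
proof -
  obtain k where b: "b = (h ^^ k) a" using assms(2) by (auto simp: orbit_of_def)
  define n where "n = orb_size h a"
  have n: "n > 0" "(h ^^ n) a = a" using orbit_period[OF assms(1), of a] n_def by auto
  have nk: "((h ^^ n) ^^ k) a = a" by (induction k) (use n in auto)
  have ak: "a = (h ^^ (n * k - k)) b"
  proof -
    have "(h ^^ (n * k - k)) b = (h ^^ (n * k - k + k)) a" by (simp add: b funpow_add)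
    also have "n * k - k + k = n * k" using n by (simp add: le_add_diff_inverse2)
    also have "(h ^^ (n * k)) a = a" using nk by (simp add: funpow_mult mult.commute)
    finally show ?thesis by simp
  qed
  show ?thesis
  proof
    show "orbit_of h b \<subseteq> orbit_of h a"
      by (auto simp: orbit_of_def b funpow_add[symmetric, unfolded o_def] simp del: funpow.simps)
       (metis funpow_add o_apply)
    show "orbit_of h a \<subseteq> orbit_of h b"
      by (auto simp: orbit_of_def) (metis ak funpow_add o_apply)
  qed
qed

lemma orb_size_same:
  fixes h :: "'a::finite \<Rightarrow> 'a"
  assumes "inj h" "b \<in> orbit_of h a"
  shows "orb_size h b = orb_size h a"
  using orbit_same[OF assms] by (simp add: orb_size_def)

lemma funpow_in_orbit_of: "(h ^^ k) a \<in> orbit_of h a"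
  by (auto simp: orbit_of_def)

lemma rot_map_periodic:
  assumes "\<And>k. \<phi> (k + m) = \<phi> k"
  shows "rotate j (map \<phi> [0..<m]) = map (\<lambda>k. \<phi> (k + j)) [0..<m]"
proof (induction j)
  case 0
  then show ?case by simp
next
  case (Suc j)
  have "rotate (Suc j) (map \<phi> [0..<m]) = rotate1 (map (\<lambda>k. \<phi> (k + j)) [0..<m])"
    using Suc by (simp add: rotate_Suc)
  also have "\<dots> = map (\<lambda>k. \<phi> (k + Suc j)) [0..<m]"
  proof (cases m)
    case 0
    then show ?thesis by simp
  next
    case (Suc m')
    have "rotate1 (map (\<lambda>k. \<phi> (k + j)) [0..<m]) = map (\<lambda>k. \<phi> (k + j)) [1..<m] @ [\<phi> j]"
    proof -
      have "[0..<m] = 0 # [1..<m]" using Suc by (simp add: upt_conv_Cons)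
      then show ?thesis by simp
    qed
    also have "\<phi> j = \<phi> (m + j)" using assms[of j] by (simp add: add.commute)
    also have "map (\<lambda>k. \<phi> (k + j)) [1..<m] @ [\<phi> (m + j)] = map (\<lambda>k. \<phi> (k + j)) [1..<Suc m]"
      using Suc by simp
    also have "\<dots> = map (\<lambda>k. \<phi> (k + Suc j)) [0..<m]"
      by (induction m) auto
    finally show ?thesis .
  qed
  finally show ?case .
qed

definition Cyc :: "('a \<Rightarrow> 'a) \<Rightarrow> 'a \<Rightarrow> 'a list" where
  "Cyc h b = map (\<lambda>k. (h ^^ k) b) [0..<orb_size h b]"

definition Tl :: "('a \<Rightarrow> 'a) \<Rightarrow> 'a \<Rightarrow> 'a list" where
  "Tl h b = map (\<lambda>k. (h ^^ k) b) [1..<orb_size h b]"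

lemma Cyc_eq_Tl:
  fixes h :: "'a::finite \<Rightarrow> 'a"
  assumes "inj h" shows "Cyc h b = b # Tl h b"
  using orbit_period[OF assms, of b]
  by (simp add: Cyc_def Tl_def upt_conv_Cons)

lemma rotate_Cyc:
  fixes h :: "'a::finite \<Rightarrow> 'a"
  assumes "inj h" shows "rotate j (Cyc h b) = Cyc h ((h ^^ j) b)"
proof -
  define n where "n = orb_size h b"
  have n: "n > 0" "(h ^^ n) b = b" using orbit_period[OF assms, of b] n_def by auto
  have per: "(h ^^ (k + n)) b = (h ^^ k) b" for k by (simp add: funpow_add n)
  have "rotate j (Cyc h b) = map (\<lambda>k. (h ^^ (k + j)) b) [0..<n]"
    unfolding Cyc_def n_def[symmetric] by (rule rot_map_periodic) (rule per)
  also have "\<dots> = Cyc h ((h ^^ j) b)"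
    unfolding Cyc_def orb_size_same[OF assms funpow_in_orbit_of] n_def
    by (simp add: funpow_add)
  finally show ?thesis .
qed

lemma rotate_inv_ex: "rotate j l = l' \<Longrightarrow> \<exists>k. l = rotate k l'"
proof -
  assume a: "rotate j l = l'"
  define L where "L = length l"
  show ?thesis
  proof (cases "L = 0")
    case True then show ?thesis using a L_def by auto
  next
    case False
    have "rotate (L - j mod L) l' = rotate (L - j mod L + j) l" by (simp add: a[symmetric] rotate_rotate)
    also have "\<dots> = l"
    proof (rule rotate_id)
      have "(L - j mod L + j) mod L = (L - j mod L + j mod L) mod L" by (simp add: mod_add_right_eq)
      also have "\<dots> = 0" using False by (simp add: le_add_diff_inverse2 less_imp_le)
      finally show "(L - j mod L + j) mod length l = 0" using L_def by simp
    qed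
    finally show ?thesis by metis
  qed
qed

lemma Cyc_inj:
  fixes h :: "'a::finite \<Rightarrow> 'a"
  assumes "inj h" shows "Cyc h b = Cyc h x \<longleftrightarrow> b = x"
  using Cyc_eq_Tl[OF assms] by (metis list.inject)

lemma cyc_count:
  fixes h :: "'a::finite \<Rightarrow> 'a" and w :: "'a \<Rightarrow> 'k::field"
  assumes inj: "inj h" and reps: "orbit_reps h R"
    and wc: "\<And>a b. b \<in> orbit_of h a \<Longrightarrow> w b = w a"
  shows "(\<Sum>j<Suc (length as). \<Sum>b\<in>R. if Cyc h b = rotate j (\<gamma> # as) then w b else 0)
       = (if as = Tl h \<gamma> then w \<gamma> else 0)"
proof (cases "as = Tl h \<gamma>")
  case False
  have "(if Cyc h b = rotate j (\<gamma> # as) then w b else 0) = 0" for j b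
  proof (rule ccontr)
    assume "\<not> ?thesis"
    then have "rotate j (\<gamma> # as) = Cyc h b" by (auto split: if_splits)
    then obtain k where "\<gamma> # as = rotate k (Cyc h b)" using rotate_inv_ex by metis
    also have "\<dots> = Cyc h ((h ^^ k) b)" by (rule rotate_Cyc[OF inj])
    also have "\<dots> = (h ^^ k) b # Tl h ((h ^^ k) b)" by (rule Cyc_eq_Tl[OF inj])
    finally show False using False by simp
  qed
  then show ?thesis using False by simp
next
  case True
  define m where "m = orb_size h \<gamma>"
  have per: "0 < m" "\<forall>i j. i < m \<longrightarrow> j < m \<longrightarrow> (h ^^ i) \<gamma> = (h ^^ j) \<gamma> \<longrightarrow> i = j"
     "orbit_of h \<gamma> = (\<lambda>k. (h ^^ k) \<gamma>) ` {..<m}"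
    using orbit_period[OF inj, of \<gamma>] m_def by auto
  have len: "Suc (length as) = m" using True per(1) by (simp add: Tl_def m_def)
  have cyc: "\<gamma> # as = Cyc h \<gamma>" using True Cyc_eq_Tl[OF inj] by simp
  have finR: "finite R" by simp
  have inner: "(\<Sum>b\<in>R. if Cyc h b = rotate j (\<gamma> # as) then w b else 0)
      = (if (h ^^ j) \<gamma> \<in> R then w \<gamma> else 0)" for j
  proof -
    have "(\<Sum>b\<in>R. if Cyc h b = rotate j (\<gamma> # as) then w b else 0)
        = (\<Sum>b\<in>R. if b = (h ^^ j) \<gamma> then w b else 0)"
      by (simp add: cyc rotate_Cyc[OF inj] Cyc_inj[OF inj])
    also have "\<dots> = (if (h ^^ j) \<gamma> \<in> R then w ((h ^^ j) \<gamma>) else 0)"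
      using sum.delta'[OF finR] by simp
    also have "w ((h ^^ j) \<gamma>) = w \<gamma>" by (rule wc) (rule funpow_in_orbit_of)
    finally show ?thesis .
  qed
  obtain r where r: "r \<in> R" "r \<in> orbit_of h \<gamma>"
    and runi: "\<And>r'. r' \<in> R \<Longrightarrow> r' \<in> orbit_of h \<gamma> \<Longrightarrow> r' = r"
    using reps unfolding orbit_reps_def by blast
  obtain j0 where j0: "j0 < m" "r = (h ^^ j0) \<gamma>" using r(2) per(3) by auto
  have iff: "j < m \<Longrightarrow> ((h ^^ j) \<gamma> \<in> R) = (j = j0)" for j
  proof
    assume "j < m" "(h ^^ j) \<gamma> \<in> R"
    then have "(h ^^ j) \<gamma> = r" using runi funpow_in_orbit_of by metis
    then show "j = j0" using per(2) j0 \<open>j < m\<close> by metis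
  qed (use j0 r in auto)
  have "(\<Sum>j<Suc (length as). \<Sum>b\<in>R. if Cyc h b = rotate j (\<gamma> # as) then w b else 0)
      = (\<Sum>j<m. if j = j0 then w \<gamma> else 0)"
    unfolding len inner by (intro sum.cong refl) (simp add: iff)
  also have "\<dots> = w \<gamma>" using j0 by simp
  finally show ?thesis using True by simp
qed

locale QS =
  fixes s t :: "'a::finite \<Rightarrow> 'v::finite" and f g :: "'a \<Rightarrow> 'a" and c :: "'a \<Rightarrow> 'k::field"
    and Rf Rg :: "'a set"
  assumes setting: "quiver_setting s t f g c"
    and reps_f: "orbit_reps f Rf" and reps_g: "orbit_reps g Rg"
begin

lemma injf: "inj f" and injg: "inj g"
  using setting by (auto simp: quiver_setting_def bij_is_inj)

lemma fff[simp]: "f (f (f x)) = x"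
proof -
  have "f ^^ 3 = id" using setting by (simp add: quiver_setting_def)
  then have "(f ^^ 3) x = x" by simp
  then show ?thesis by (simp add: numeral_3_eq_3)
qed

lemma outset: "{f a, g a} = {b. s b = t a}"
  using setting by (simp add: quiver_setting_def)

lemma sf[simp]: "s (f a) = t a" and sg[simp]: "s (g a) = t a"
  using outset[of a] by blast+

lemma out_cases: "s b = t a \<Longrightarrow> b = f a \<or> b = g a"
  using outset[of a] by blast

lemma f_neq_g: "f a \<noteq> g a"
proof
  assume "f a = g a"
  then have "{b. s b = t a} = {f a}" using outset[of a] by simp
  moreover have "card {b. s b = t a} = 2" using setting by (simp add: quiver_setting_def)
  ultimately show False by simp
qed

lemma st_neq: "s a \<noteq> t a"
  using setting by (simp add: quiver_setting_def)

lemma no2: "\<not> (s a = t b \<and> t a = s b)"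
  using setting by (simp add: quiver_setting_def)

lemma c_orb: "b \<in> orbit_of g a \<Longrightarrow> c b = c a"
  using setting by (simp add: quiver_setting_def)

lemma c_nz: "c a \<noteq> 0"
  using setting by (simp add: quiver_setting_def)

lemma c_g[simp]: "c ((g ^^ k) a) = c a"
  by (rule c_orb) (rule funpow_in_orbit_of)

lemma c_g1[simp]: "c (g a) = c a"
  using c_g[of 1 a] by simp

abbreviation n where "n \<equiv> orb_size g"

lemma n_g[simp]: "n ((g ^^ k) a) = n a"
  by (rule orb_size_same[OF injg]) (rule funpow_in_orbit_of)

lemma n_g1[simp]: "n (g a) = n a"
  using n_g[of 1 a] by simp

lemma per_g: "0 < n a" "(g ^^ n a) a = a"
  "\<And>i j. i < n a \<Longrightarrow> j < n a \<Longrightarrow> (g ^^ i) a = (g ^^ j) a \<Longrightarrow> i = j"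
  "orbit_of g a = (\<lambda>k. (g ^^ k) a) ` {..<n a}"
  using orbit_period[OF injg, of a] by auto

lemma period_ge3:
  fixes h :: "'a \<Rightarrow> 'a"
  assumes inj: "inj h" and h1: "h a \<noteq> a" and h2: "h (h a) \<noteq> a"
  shows "orb_size h a \<ge> 3"
proof (rule ccontr)
  assume "\<not> ?thesis"
  then have "orb_size h a = 1 \<or> orb_size h a = 2" using orbit_period[OF inj, of a] by linarith
  then show False using orbit_period[OF inj, of a] h1 h2 by (auto simp: numeral_2_eq_2)
qed

lemma n_ge3: "n a \<ge> 3"
proof (rule period_ge3[OF injg])
  show "g a \<noteq> a" using st_neq[of a] sg[of a] by metis
  show "g (g a) \<noteq> a"
  proof
    assume e: "g (g a) = a"
    have "s a = t (g a)" using sg[of "g a"] e by simp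
    moreover have "t a = s (g a)" by simp
    ultimately show False using no2[of a "g a"] by simp
  qed
qed

lemma orb_f3: "orb_size f a = 3"
proof -
  have f1: "f a \<noteq> a" using st_neq[of a] sf[of a] by metis
  have f2: "f (f a) \<noteq> a" using f1 fff[of a] by metis
  have ge: "orb_size f a \<ge> 3" by (rule period_ge3[OF injf f1 f2])
  have "(f ^^ 3) a = (f ^^ 0) a" by (simp add: numeral_3_eq_3)
  moreover have "\<forall>i j. i < orb_size f a \<longrightarrow> j < orb_size f a \<longrightarrow> (f ^^ i) a = (f ^^ j) a \<longrightarrow> i = j"
    using orbit_period[OF injf, of a] by blast
  ultimately have "\<not> 3 < orb_size f a" by force
  then show ?thesis using ge by simp
qed

lemma Cyc_f: "Cyc f a = [a, f a, f (f a)]"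
  by (simp add: Cyc_def orb_f3 numeral_3_eq_3 upt_rec)

lemma Tl_f: "Tl f a = [f a, f (f a)]"
  by (simp add: Tl_def orb_f3 numeral_3_eq_3 upt_rec)

end

context QS begin

abbreviation WW where "WW \<equiv> potential s f g c Rf Rg"
abbreviation J where "J x \<equiv> jac_ideal s t WW x"

lemma path_ser_ap: "path_ser (arrows_path s X) (arrows_path s l) = (if X = l then 1 else 0)"
  by (auto simp: path_ser_def arrows_path_def)

lemma W_ap: "WW (arrows_path s l) =
   (\<Sum>a\<in>Rf. if Cyc f a = l then 1 else 0) - (\<Sum>b\<in>Rg. if Cyc g b = l then c b else 0)"
  unfolding potential_def path_ser_ap Cyc_f[symmetric]
  by (simp add: Cyc_def[symmetric] if_distrib cong: if_cong)

lemma Tl_valid: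
  fixes h :: "'a \<Rightarrow> 'a"
  assumes inj: "inj h" and sh: "\<And>x. s (h x) = t x" and m2: "orb_size h \<gamma> \<ge> 2"
  shows "valid_path s t (t \<gamma>, Tl h \<gamma>) \<and> path_end t (t \<gamma>, Tl h \<gamma>) = s \<gamma>"
proof -
  define m where "m = orb_size h \<gamma>"
  have pm: "(h ^^ m) \<gamma> = \<gamma>" using orbit_period[OF inj, of \<gamma>] m_def by simp
  have ne: "Tl h \<gamma> \<noteq> []" using m2 by (simp add: Tl_def)
  have hd: "hd (Tl h \<gamma>) = h \<gamma>" using m2 by (simp add: Tl_def upt_conv_Cons)
  have succ: "successively (\<lambda>a b. t a = s b) (Tl h \<gamma>)"
    unfolding successively_conv_nth Tl_def by (auto simp: sh)
  have last: "t (last (Tl h \<gamma>)) = s \<gamma>"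
  proof -
    have "last (Tl h \<gamma>) = (h ^^ (m - 1)) \<gamma>" using m2 by (simp add: Tl_def m_def last_map)
    then have "t (last (Tl h \<gamma>)) = s (h ((h ^^ (m - 1)) \<gamma>))" by (simp add: sh)
    also have "h ((h ^^ (m - 1)) \<gamma>) = (h ^^ Suc (m - 1)) \<gamma>" by simp
    also have "Suc (m - 1) = m" using m2 m_def by simp
    finally show ?thesis using pm by simp
  qed
  show ?thesis using ne hd succ last sh
    by (simp add: valid_path_def path_end_def)
qed

lemma Tlf_valid: "valid_path s t (t \<gamma>, Tl f \<gamma>) \<and> path_end t (t \<gamma>, Tl f \<gamma>) = s \<gamma>"
  by (rule Tl_valid[OF injf]) (auto simp: orb_f3)

lemma Tlg_valid: "valid_path s t (t \<gamma>, Tl g \<gamma>) \<and> path_end t (t \<gamma>, Tl g \<gamma>) = s \<gamma>"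
  by (rule Tl_valid[OF injg]) (use n_ge3[of \<gamma>] in auto)

lemma D_formula:
  "cyc_deriv s t WW \<gamma> = (\<lambda>p. path_ser (t \<gamma>, Tl f \<gamma>) p - c \<gamma> * path_ser (t \<gamma>, Tl g \<gamma>) p)"
proof (rule ext, clarify)
  fix v as
  show "cyc_deriv s t WW \<gamma> (v, as) = path_ser (t \<gamma>, Tl f \<gamma>) (v, as) - c \<gamma> * path_ser (t \<gamma>, Tl g \<gamma>) (v, as)"
  proof (cases "valid_path s t (v, as) \<and> v = t \<gamma> \<and> path_end t (v, as) = s \<gamma>")
    case True
    have "cyc_deriv s t WW \<gamma> (v, as) = (\<Sum>j<Suc (length as). WW (arrows_path s (rotate j (\<gamma> # as))))"
      by (simp only: cyc_deriv_def prod.case if_P[OF True])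
    also have "\<dots> = (\<Sum>j<Suc (length as). (\<Sum>a\<in>Rf. if Cyc f a = rotate j (\<gamma> # as) then 1 else 0))
         - (\<Sum>j<Suc (length as). (\<Sum>b\<in>Rg. if Cyc g b = rotate j (\<gamma> # as) then c b else 0))"
      by (simp add: W_ap sum_subtractf)
    also have "\<dots> = (if as = Tl f \<gamma> then 1 else 0) - (if as = Tl g \<gamma> then c \<gamma> else 0)"
      using cyc_count[OF injf reps_f, where w="\<lambda>_. 1::'k" and as=as and \<gamma>=\<gamma>]
        cyc_count[OF injg reps_g, where w=c and as=as and \<gamma>=\<gamma>] c_orb by simp
    finally show ?thesis using True by (auto simp: path_ser_def)
  next
    case False
    then have "cyc_deriv s t WW \<gamma> (v, as) = 0" by (auto simp: cyc_deriv_def)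
    moreover have "path_ser (t \<gamma>, Tl f \<gamma>) (v, as) = (0::'k)"
      using False Tlf_valid[of \<gamma>] by (auto simp: path_ser_def)
    moreover have "path_ser (t \<gamma>, Tl g \<gamma>) (v, as) = (0::'k)"
      using False Tlg_valid[of \<gamma>] by (auto simp: path_ser_def)
    ultimately show ?thesis by simp
  qed
qed

lemma J0: "J (\<lambda>p. 0)"
  unfolding jac_ideal_def by (rule exI[of _ "[]"]) (simp add: fun_eq_iff)

lemma Jadd: assumes "J x" "J y" shows "J (\<lambda>p. x p + y p)"
proof -
  obtain L1 where L1: "\<forall>(a, gam, b) \<in> set L1. is_series s t a \<and> is_series s t b"
    "x = (\<lambda>p. \<Sum>(a, gam, b) \<leftarrow> L1. ser_mult s t (ser_mult s t a (cyc_deriv s t WW gam)) b p)"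
    using assms(1) unfolding jac_ideal_def by blast
  obtain L2 where L2: "\<forall>(a, gam, b) \<in> set L2. is_series s t a \<and> is_series s t b"
    "y = (\<lambda>p. \<Sum>(a, gam, b) \<leftarrow> L2. ser_mult s t (ser_mult s t a (cyc_deriv s t WW gam)) b p)"
    using assms(2) unfolding jac_ideal_def by blast
  show ?thesis unfolding jac_ideal_def
    by (rule exI[of _ "L1 @ L2"]) (use L1 L2 in auto)
qed

lemma Jscal: assumes "J x" shows "J (\<lambda>p. k * x p)"
proof -
  obtain L where L: "\<forall>(a, gam, b) \<in> set L. is_series s t a \<and> is_series s t b"
    "x = (\<lambda>p. \<Sum>(a, gam, b) \<leftarrow> L. ser_mult s t (ser_mult s t a (cyc_deriv s t WW gam)) b p)"
    using assms(1) unfolding jac_ideal_def by blast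
  define L' where "L' = map (\<lambda>(a, gam, b). ((\<lambda>p. k * a p), gam, b)) L"
  have "(\<lambda>p. k * x p) = (\<lambda>p. \<Sum>(a, gam, b) \<leftarrow> L'. ser_mult s t (ser_mult s t a (cyc_deriv s t WW gam)) b p)"
    unfolding L'_def L(2) by (simp add: ser_mult_scal1 sum_list_const_mult[symmetric] case_prod_unfold o_def)
  moreover have "\<forall>(a, gam, b) \<in> set L'. is_series s t a \<and> is_series s t b"
    using L(1) unfolding L'_def by (auto simp: is_series_def)
  ultimately show ?thesis unfolding jac_ideal_def by blast
qed

lemma Jsub: assumes "J x" "J y" shows "J (\<lambda>p. x p - y p)"
  using Jadd[OF assms(1) Jscal[OF assms(2), of "-1"]] by simp

lemma path_ser_series: "valid_path s t P \<Longrightarrow> is_series s t (path_ser P)"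
  by (auto simp: is_series_def path_ser_def)

abbreviation chain where "chain l \<equiv> successively (\<lambda>a b. t a = s b) l"
abbreviation pser :: "'a list \<Rightarrow> 'v \<times> 'a list \<Rightarrow> 'k" where "pser l \<equiv> path_ser (s (hd l), l)"

lemma path_end_concat: "path_end t (v, U @ V) = path_end t (path_end t (v, U), V)"
  by (simp add: path_end_def)

lemma Jbasic:
  assumes ch: "chain (U @ Tl f \<gamma> @ V)"
  shows "J (\<lambda>p. pser (U @ Tl f \<gamma> @ V) p - c \<gamma> * pser (U @ Tl g \<gamma> @ V) p)"
proof -
  define v0 where "v0 = s (hd (U @ Tl f \<gamma> @ V))"
  define P where "P = (v0, U)"
  define Q where "Q = (s \<gamma>, V)"
  have chU: "chain U" and chV: "chain V" using ch by (auto simp: successively_append_iff)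
  have lastU: "U \<noteq> [] \<Longrightarrow> t (last U) = t \<gamma>" using ch by (auto simp: successively_append_iff Tl_f)
  have hdV: "V \<noteq> [] \<Longrightarrow> s (hd V) = s \<gamma>"
  proof -
    assume "V \<noteq> []"
    then obtain x V' where "V = x # V'" by (cases V) auto
    moreover have "t (f (f \<gamma>)) = s \<gamma>" using sf[of "f (f \<gamma>)"] by simp
    ultimately show ?thesis using ch by (auto simp: successively_append_iff Tl_f)
  qed
  have vP: "valid_path s t P" using chU by (cases U) (auto simp: P_def v0_def valid_path_def)
  have eP: "path_end t P = t \<gamma>" using lastU by (cases U) (auto simp: P_def v0_def path_end_def Tl_f)
  have vQ: "valid_path s t Q" using chV hdV by (auto simp: Q_def valid_path_def)
  have v0g: "s (hd (U @ Tl g \<gamma> @ V)) = v0"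
  proof -
    have ne: "Tl g \<gamma> \<noteq> []" using n_ge3[of \<gamma>] by (simp add: Tl_def)
    then show ?thesis
      using Tlg_valid[of \<gamma>] by (cases U) (auto simp: v0_def Tl_f valid_path_def)
  qed
  have step: "ser_mult s t (path_ser P) (path_ser (t \<gamma>, Tl h \<gamma>)) = (path_ser (v0, U @ Tl h \<gamma>) :: _ \<Rightarrow> 'k)
      \<and> ser_mult s t (path_ser (v0, U @ Tl h \<gamma>)) (path_ser Q) = (path_ser (v0, U @ Tl h \<gamma> @ V) :: _ \<Rightarrow> 'k)"
    if hv: "valid_path s t (t \<gamma>, Tl h \<gamma>) \<and> path_end t (t \<gamma>, Tl h \<gamma>) = s \<gamma>" for h
  proof
    show "ser_mult s t (path_ser P) (path_ser (t \<gamma>, Tl h \<gamma>)) = (path_ser (v0, U @ Tl h \<gamma>) :: _ \<Rightarrow> 'k)"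
      using ser_mult_path_ser[OF vP conjunct1[OF hv]] eP by (simp add: P_def)
    have v1: "valid_path s t (v0, U @ Tl h \<gamma>)"
      using valid_concat[of s t v0 U "t \<gamma>" "Tl h \<gamma>"] vP eP hv by (simp add: P_def)
    have e1: "path_end t (v0, U @ Tl h \<gamma>) = s \<gamma>"
      using eP hv by (simp add: path_end_concat P_def)
    show "ser_mult s t (path_ser (v0, U @ Tl h \<gamma>)) (path_ser Q) = (path_ser (v0, U @ Tl h \<gamma> @ V) :: _ \<Rightarrow> 'k)"
      using ser_mult_path_ser[OF v1 vQ] e1 by (simp add: Q_def)
  qed
  have sf: "ser_mult s t (ser_mult s t (path_ser P) (cyc_deriv s t WW \<gamma>)) (path_ser Q)
      = (\<lambda>p. pser (U @ Tl f \<gamma> @ V) p - c \<gamma> * pser (U @ Tl g \<gamma> @ V) p)"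
    unfolding D_formula ser_mult_lin2 ser_mult_lin1
    using step[OF Tlf_valid] step[OF Tlg_valid] v0g by (simp add: v0_def)
  show ?thesis unfolding jac_ideal_def
    by (rule exI[of _ "[(path_ser P, \<gamma>, path_ser Q)]"])
      (use sf path_ser_series[OF vP] path_ser_series[OF vQ] in \<open>auto simp: fun_eq_iff\<close>)
qed

end

context QS begin

definition RR :: "'a list \<Rightarrow> 'a list \<Rightarrow> 'k \<Rightarrow> bool" where
  "RR X Y k = (\<forall>U V. chain (U @ X @ V) \<longrightarrow> chain (U @ Y @ V) \<and>
      J (\<lambda>p. pser (U @ X @ V) p - k * pser (U @ Y @ V) p))"

lemma chain_replace:
  assumes "chain (U @ X @ V)" "X \<noteq> []" "Y \<noteq> []" "chain Y" "s (hd X) = s (hd Y)" "t (last X) = t (last Y)"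
  shows "chain (U @ Y @ V)"
  using assms by (auto simp: successively_append_iff)

lemma RR_basic: "RR (Tl f \<gamma>) (Tl g \<gamma>) (c \<gamma>)"
  unfolding RR_def
proof (intro allI impI conjI)
  fix U V assume ch: "chain (U @ Tl f \<gamma> @ V)"
  show "J (\<lambda>p. pser (U @ Tl f \<gamma> @ V) p - c \<gamma> * pser (U @ Tl g \<gamma> @ V) p)" by (rule Jbasic[OF ch])
  have ne: "Tl g \<gamma> \<noteq> []" using n_ge3[of \<gamma>] by (simp add: Tl_def)
  have vg: "valid_path s t (t \<gamma>, Tl g \<gamma>) \<and> path_end t (t \<gamma>, Tl g \<gamma>) = s \<gamma>" by (rule Tlg_valid)
  show "chain (U @ Tl g \<gamma> @ V)"
  proof (rule chain_replace[OF ch])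
    show "chain (Tl g \<gamma>)" using vg ne by (simp add: valid_path_def)
    show "s (hd (Tl f \<gamma>)) = s (hd (Tl g \<gamma>))" using vg ne by (simp add: valid_path_def Tl_f)
    show "t (last (Tl f \<gamma>)) = t (last (Tl g \<gamma>))" using vg ne sf[of "f (f \<gamma>)"] by (simp add: path_end_def Tl_f)
  qed (use ne in \<open>auto simp: Tl_f\<close>)
qed

lemma RR_trans: assumes "RR X Y k1" "RR Y Z k2" shows "RR X Z (k1 * k2)"
  unfolding RR_def
proof (intro allI impI conjI)
  fix U V assume ch: "chain (U @ X @ V)"
  have 1: "chain (U @ Y @ V)" "J (\<lambda>p. pser (U @ X @ V) p - k1 * pser (U @ Y @ V) p)"
    using assms(1) ch unfolding RR_def by auto
  have 2: "chain (U @ Z @ V)" "J (\<lambda>p. pser (U @ Y @ V) p - k2 * pser (U @ Z @ V) p)"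
    using assms(2) 1(1) unfolding RR_def by auto
  show "chain (U @ Z @ V)" by (rule 2(1))
  have "J (\<lambda>p. (pser (U @ X @ V) p - k1 * pser (U @ Y @ V) p) + k1 * (pser (U @ Y @ V) p - k2 * pser (U @ Z @ V) p))"
    by (rule Jadd[OF 1(2) Jscal[OF 2(2)]])
  then show "J (\<lambda>p. pser (U @ X @ V) p - k1 * k2 * pser (U @ Z @ V) p)"
    by (simp add: algebra_simps)
qed

lemma RR_ctx: assumes "RR X Y k" shows "RR (U0 @ X @ V0) (U0 @ Y @ V0) k"
  unfolding RR_def
proof (intro allI impI)
  fix U V assume ch: "chain (U @ (U0 @ X @ V0) @ V)"
  then have "chain ((U @ U0) @ X @ (V0 @ V))" by simp
  then have "chain ((U @ U0) @ Y @ (V0 @ V)) \<and> J (\<lambda>p. pser ((U @ U0) @ X @ (V0 @ V)) p - k * pser ((U @ U0) @ Y @ (V0 @ V)) p)"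
    using assms unfolding RR_def by blast
  then show "chain (U @ (U0 @ Y @ V0) @ V) \<and> J (\<lambda>p. pser (U @ (U0 @ X @ V0) @ V) p - k * pser (U @ (U0 @ Y @ V0) @ V) p)"
    by simp
qed

lemma RR_eq: "X = Y \<Longrightarrow> RR X Y 1"
  unfolding RR_def using J0 by simp

definition A :: "'a \<Rightarrow> 'a list" where "A a = [a, f a, g (f a)]"
definition B :: "'a \<Rightarrow> 'a list" where "B a = [a, g a, f (g a)]"

lemma funpow_g_Suc: "g ((g ^^ k) x) = (g ^^ Suc k) x" by simp

lemma F1: "g (f a) = f ((g ^^ (n (f (f a)) - 1)) (f (f a)))"
proof -
  define \<delta> where "\<delta> = f (f a)"
  define m where "m = n \<delta>"
  define x where "x = (g ^^ (m - 1)) \<delta>"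
  have gx: "g x = \<delta>"
  proof -
    have "g x = (g ^^ Suc (m - 1)) \<delta>" by (simp add: x_def)
    also have "Suc (m - 1) = m" using n_ge3[of \<delta>] m_def by simp
    finally show ?thesis using per_g(2)[of \<delta>] m_def by simp
  qed
  have "s (g (f a)) = t x"
  proof -
    have "t x = s (g x)" by simp
    also have "\<dots> = s \<delta>" by (simp add: gx)
    finally show ?thesis by (simp add: \<delta>_def)
  qed
  then have "g (f a) = f x \<or> g (f a) = g x" by (rule out_cases)
  moreover have "g (f a) \<noteq> g x" using f_neq_g[of "f a"] gx \<delta>_def by simp
  ultimately show ?thesis by (simp add: x_def m_def \<delta>_def)
qed

lemma F2: "g (f (f (g b))) = f b"
proof -
  define \<gamma> where "\<gamma> = f (f (g b))"
  have fg: "f \<gamma> = g b" by (simp add: \<gamma>_def)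
  have "s (g \<gamma>) = t b"
  proof -
    have "s (g \<gamma>) = t \<gamma>" by simp
    also have "\<dots> = s (f \<gamma>)" by simp
    finally show ?thesis by (simp add: fg)
  qed
  then have "g \<gamma> = f b \<or> g \<gamma> = g b" by (rule out_cases)
  moreover have "g \<gamma> \<noteq> g b" using f_neq_g[of \<gamma>] fg by simp
  ultimately show ?thesis by (simp add: \<gamma>_def)
qed

lemma stepA:
  fixes a :: 'a
  defines "\<delta> \<equiv> f (f a)"
  defines "m \<equiv> n \<delta>"
  defines "\<sigma> \<equiv> (g ^^ (m - 2)) \<delta>"
  shows "RR (A a) (map (\<lambda>k. (g ^^ k) \<delta>) [1..<m - 2] @ B \<sigma>) (c \<delta>)"
proof -
  have m3: "m \<ge> 3" using n_ge3 m_def by simp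
  have "RR (Tl f \<delta> @ [g (f a)]) (Tl g \<delta> @ [g (f a)]) (c \<delta>)"
    using RR_ctx[OF RR_basic, of "[]" \<delta> "[g (f a)]"] by simp
  moreover have "Tl f \<delta> @ [g (f a)] = A a" by (simp add: Tl_f A_def \<delta>_def)
  moreover have "Tl g \<delta> @ [g (f a)] = map (\<lambda>k. (g ^^ k) \<delta>) [1..<m - 2] @ B \<sigma>"
  proof -
    have u: "[1..<m] = [1..<m - 2] @ [m - 2, m - 1]"
    proof -
      have mm: "m = Suc (Suc (m - 2))" using m3 by simp
      have e: "m - 2 + 2 = m" using m3 by simp
      have "[1..<m - 2 + 2] = [1..<m - 2] @ [m - 2..<m - 2 + 2]"
        by (rule upt_add_eq_append) (use m3 in simp)
      then have "[1..<m] = [1..<m - 2] @ [m - 2..<m]" unfolding e .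
      also have "[m - 2..<m] = [m - 2, m - 1]"
      proof -
        obtain k where k: "m = Suc (Suc k)" using mm by blast
        show ?thesis unfolding k by simp
      qed
      finally show ?thesis .
    qed
    have gs: "g \<sigma> = (g ^^ (m - 1)) \<delta>"
    proof -
      have "g \<sigma> = (g ^^ Suc (m - 2)) \<delta>" by (simp add: \<sigma>_def)
      also have "Suc (m - 2) = m - 1" using m3 by simp
      finally show ?thesis .
    qed
    have "Tl g \<delta> = map (\<lambda>k. (g ^^ k) \<delta>) [1..<m - 2] @ [\<sigma>, g \<sigma>]"
    proof -
      have gs': "(g ^^ (m - Suc 0)) \<delta> = g \<sigma>" using gs by simp
      show ?thesis unfolding Tl_def m_def[symmetric] u by (simp add: gs' del: funpow.simps) (simp add: \<sigma>_def)
    qed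
    moreover have "f (g \<sigma>) = g (f a)" using F1[of a] gs by (simp add: m_def \<delta>_def)
    ultimately show ?thesis by (simp add: B_def)
  qed
  ultimately show ?thesis by simp
qed

lemma stepB:
  fixes b :: 'a
  defines "\<gamma> \<equiv> f (f (g b))"
  shows "RR (B b) (A b @ map (\<lambda>k. (g ^^ k) \<gamma>) [3..<n \<gamma>]) (c \<gamma>)"
proof -
  have m3: "n \<gamma> \<ge> 3" using n_ge3 by simp
  have "RR ([b] @ Tl f \<gamma>) ([b] @ Tl g \<gamma>) (c \<gamma>)"
    using RR_ctx[OF RR_basic, of "[b]" \<gamma> "[]"] by simp
  moreover have "[b] @ Tl f \<gamma> = B b" by (simp add: Tl_f B_def \<gamma>_def)
  moreover have "[b] @ Tl g \<gamma> = A b @ map (\<lambda>k. (g ^^ k) \<gamma>) [3..<n \<gamma>]"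
  proof -
    have u: "[1..<n \<gamma>] = [1, 2] @ [3..<n \<gamma>]"
    proof -
      have "[1..<n \<gamma>] = 1 # [Suc 1..<n \<gamma>]" by (rule upt_conv_Cons) (use m3 in simp)
      also have "Suc 1 = (2::nat)" by simp
      also have "[2..<n \<gamma>] = 2 # [Suc 2..<n \<gamma>]" by (rule upt_conv_Cons) (use m3 in simp)
      also have "Suc 2 = (3::nat)" by simp
      finally show ?thesis by simp
    qed
    have g1: "g \<gamma> = f b" using F2[of b] by (simp add: \<gamma>_def)
    show ?thesis unfolding Tl_def u using g1 by (simp add: A_def numeral_2_eq_2)
  qed
  ultimately show ?thesis by simp
qed

end

context QS begin

abbreviation ZJ where "ZJ x \<equiv> zero_in_jacobian s t WW x"

lemma stepAA:
  fixes a :: 'a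
  defines "\<delta> \<equiv> f (f a)"
  defines "m \<equiv> n \<delta>"
  defines "\<sigma> \<equiv> (g ^^ (m - 2)) \<delta>"
  defines "\<gamma> \<equiv> f (f (g \<sigma>))"
  shows "RR (A a) (map (\<lambda>k. (g ^^ k) \<delta>) [1..<m - 2] @ A \<sigma> @ map (\<lambda>k. (g ^^ k) \<gamma>) [3..<n \<gamma>]) (c \<delta> * c \<gamma>)
     \<and> n \<sigma> = m \<and> n (f \<sigma>) = n \<gamma> \<and> \<sigma> = (g ^^ (m - 2)) (f (f a))"
proof (intro conjI)
  have 1: "RR (A a) (map (\<lambda>k. (g ^^ k) \<delta>) [1..<m - 2] @ B \<sigma>) (c \<delta>)"
    using stepA[of a] by (simp add: \<delta>_def m_def \<sigma>_def)
  have 2: "RR (map (\<lambda>k. (g ^^ k) \<delta>) [1..<m - 2] @ B \<sigma> @ []) (map (\<lambda>k. (g ^^ k) \<delta>) [1..<m - 2] @ (A \<sigma> @ map (\<lambda>k. (g ^^ k) \<gamma>) [3..<n \<gamma>]) @ []) (c \<gamma>)"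
    by (rule RR_ctx) (use stepB[of \<sigma>] in \<open>simp add: \<gamma>_def\<close>)
  show "RR (A a) (map (\<lambda>k. (g ^^ k) \<delta>) [1..<m - 2] @ A \<sigma> @ map (\<lambda>k. (g ^^ k) \<gamma>) [3..<n \<gamma>]) (c \<delta> * c \<gamma>)"
    using RR_trans[OF 1 2[unfolded append_Nil2]] by simp
  show "n \<sigma> = m" by (simp add: \<sigma>_def m_def)
  have "g \<gamma> = f \<sigma>" using F2[of \<sigma>] by (simp add: \<gamma>_def)
  then show "n (f \<sigma>) = n \<gamma>" using n_g1[of \<gamma>] by simp
  show "\<sigma> = (g ^^ (m - 2)) (f (f a))" by (simp add: \<sigma>_def \<delta>_def)
qed

lemma step_star:
  assumes star: "\<forall>a. orb_size g a \<ge> 4 \<or> orb_size g (f a) \<ge> 4"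
  shows "\<exists>X Y \<sigma> k. RR (A a) (X @ A \<sigma> @ Y) k \<and> length X + length Y \<ge> 1"
proof -
  define \<delta> where "\<delta> = f (f a)"
  define m where "m = n \<delta>"
  define \<sigma> where "\<sigma> = (g ^^ (m - 2)) \<delta>"
  define \<gamma> where "\<gamma> = f (f (g \<sigma>))"
  have st: "RR (A a) (map (\<lambda>k. (g ^^ k) \<delta>) [1..<m - 2] @ A \<sigma> @ map (\<lambda>k. (g ^^ k) \<gamma>) [3..<n \<gamma>]) (c \<delta> * c \<gamma>)"
     "n \<sigma> = m" "n (f \<sigma>) = n \<gamma>"
    using stepAA[of a] unfolding \<delta>_def m_def \<sigma>_def \<gamma>_def by auto
  have "length (map (\<lambda>k. (g ^^ k) \<delta>) [1..<m - 2]) + length (map (\<lambda>k. (g ^^ k) \<gamma>) [3..<n \<gamma>]) \<ge> 1"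
    using star[rule_format, of \<sigma>] st(2,3) by auto
  with st(1) show ?thesis by blast
qed

lemma J_comb: assumes "J (\<lambda>p. x p - k1 * y p)" "J (\<lambda>p. y p - k2 * z p)"
  shows "J (\<lambda>p. x p - (k1 * k2) * z p)"
proof -
  have "J (\<lambda>p. (x p - k1 * y p) + k1 * (y p - k2 * z p))"
    by (rule Jadd[OF assms(1) Jscal[OF assms(2)]])
  then show ?thesis by (simp add: algebra_simps)
qed

lemma iter_star:
  assumes star: "\<forall>a. orb_size g a \<ge> 4 \<or> orb_size g (f a) \<ge> 4"
  shows "chain (U @ A a @ V) \<Longrightarrow> \<exists>k Z. J (\<lambda>p. pser (U @ A a @ V) p - k * pser Z p) \<and> length Z \<ge> N + length (U @ A a @ V)"
proof (induction N arbitrary: a U V)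
  case 0
  show ?case by (rule exI[of _ 1], rule exI[of _ "U @ A a @ V"]) (simp add: J0)
next
  case (Suc N)
  obtain X Y \<sigma> k where st: "RR (A a) (X @ A \<sigma> @ Y) k" "length X + length Y \<ge> 1"
    using step_star[OF star, of a] by blast
  have 1: "chain (U @ (X @ A \<sigma> @ Y) @ V)" "J (\<lambda>p. pser (U @ A a @ V) p - k * pser (U @ (X @ A \<sigma> @ Y) @ V) p)"
    using st(1) Suc.prems unfolding RR_def by blast+
  have ch: "chain ((U @ X) @ A \<sigma> @ (Y @ V))" using 1(1) by simp
  obtain k2 Z where 2: "J (\<lambda>p. pser ((U @ X) @ A \<sigma> @ (Y @ V)) p - k2 * pser Z p)"
    "length Z \<ge> N + length ((U @ X) @ A \<sigma> @ (Y @ V))"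
    using Suc.IH[OF ch] by blast
  have "J (\<lambda>p. pser (U @ A a @ V) p - (k * k2) * pser Z p)"
    by (rule J_comb[OF 1(2)]) (use 2(1) in simp)
  moreover have "length Z \<ge> Suc N + length (U @ A a @ V)"
    using 2(2) st(2) by (simp add: A_def)
  ultimately show ?case by blast
qed

lemma ZJ_of_approx:
  assumes "\<And>N. \<exists>k Z. J (\<lambda>p. x p - k * pser Z p) \<and> length Z \<ge> N"
  shows "ZJ x"
  unfolding zero_in_jacobian_def
proof
  fix N
  obtain k Z where kz: "J (\<lambda>p. x p - k * pser Z p)" "length Z \<ge> N" using assms by blast
  show "\<exists>y. J y \<and> (\<forall>p. length (snd p) < N \<longrightarrow> x p = y p)"
  proof (intro exI conjI allI impI)
    show "J (\<lambda>p. x p - k * pser Z p)" by (rule kz(1))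
    fix p :: "'v \<times> 'a list" assume "length (snd p) < N"
    then have "p \<noteq> (s (hd Z), Z)" using kz(2) by auto
    then show "x p = x p - k * pser Z p" by (simp add: path_ser_def)
  qed
qed

lemma ZJ_of_J: "J x \<Longrightarrow> ZJ x"
  unfolding zero_in_jacobian_def by blast

lemma ZJ_transfer:
  assumes "J (\<lambda>p. x p - k * y p)" "ZJ y" shows "ZJ x"
  unfolding zero_in_jacobian_def
proof
  fix N
  obtain y' where y': "J y'" "\<forall>p. length (snd p) < N \<longrightarrow> y p = y' p"
    using assms(2) unfolding zero_in_jacobian_def by blast
  have "J (\<lambda>p. (x p - k * y p) + k * y' p)" by (rule Jadd[OF assms(1) Jscal[OF y'(1)]])
  moreover have "\<forall>p. length (snd p) < N \<longrightarrow> x p = (x p - k * y p) + k * y' p" using y'(2) by simp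
  ultimately show "\<exists>y. J y \<and> (\<forall>p. length (snd p) < N \<longrightarrow> x p = y p)" by blast
qed

lemma AZ_star:
  assumes star: "\<forall>a. orb_size g a \<ge> 4 \<or> orb_size g (f a) \<ge> 4"
    and ch: "chain (U @ A a @ V)"
  shows "ZJ (pser (U @ A a @ V))"
proof (rule ZJ_of_approx)
  fix N
  obtain k Z where "J (\<lambda>p. pser (U @ A a @ V) p - k * pser Z p)" "length Z \<ge> N + length (U @ A a @ V)"
    using iter_star[OF star ch, of N] by blast
  then show "\<exists>k Z. J (\<lambda>p. pser (U @ A a @ V) p - k * pser Z p) \<and> N \<le> length Z" by force
qed

lemma AZ_cycle:
  assumes "RR (A a) (A a) k" "k \<noteq> 1" "chain (U @ A a @ V)"
  shows "ZJ (pser (U @ A a @ V))"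
proof -
  have "J (\<lambda>p. pser (U @ A a @ V) p - k * pser (U @ A a @ V) p)"
    using assms(1,3) unfolding RR_def by blast
  then have "J (\<lambda>p. inverse (1 - k) * (pser (U @ A a @ V) p - k * pser (U @ A a @ V) p))"
    by (rule Jscal)
  moreover have "(\<lambda>p. inverse (1 - k) * (pser (U @ A a @ V) p - k * pser (U @ A a @ V) p)) = pser (U @ A a @ V)"
    using assms(2) by (auto simp: fun_eq_iff field_simps)
  ultimately show ?thesis using ZJ_of_J by simp
qed

end

lemma ser_mult_path_ser_zero:
  assumes "path_end t P \<noteq> fst Q"
  shows "ser_mult s t (path_ser P) (path_ser Q) = (\<lambda>_. (0::'k::field))"
proof (rule ext, clarify)
  fix w as
  show "ser_mult s t (path_ser P) (path_ser Q) (w, as) = (0::'k)"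
    using assms by (auto simp: ser_mult_def path_ser_def intro!: sum.neutral)
qed

context QS begin

lemma Tl_g_cons: "Tl g x = g x # map (\<lambda>k. (g ^^ k) x) [2..<n x]"
proof -
  have "[1..<n x] = 1 # [Suc 1..<n x]" by (rule upt_conv_Cons) (use n_ge3[of x] in simp)
  then show ?thesis by (simp add: Tl_def numeral_2_eq_2)
qed

lemma RR_D: "RR X Y k \<Longrightarrow> chain (U @ X @ V) \<Longrightarrow> chain (U @ Y @ V) \<and> J (\<lambda>p. pser (U @ X @ V) p - k * pser (U @ Y @ V) p)"
  unfolding RR_def by blast

lemma RR_D0: "RR X Y k \<Longrightarrow> chain X \<Longrightarrow> chain Y \<and> J (\<lambda>p. pser X p - k * pser Y p)"
  using RR_D[of X Y k "[]" "[]"] by simp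

lemma caseA:
  assumes AZ: "\<forall>a U V. chain (U @ A a @ V) \<longrightarrow> ZJ (pser (U @ A a @ V))"
  shows "ZJ (pser [x, f x, f (f x), x])"
proof -
  have rr: "RR ([x, f x] @ Tl f (f x)) ([x, f x] @ Tl g (f x)) (c (f x))"
    using RR_ctx[OF RR_basic, of "[x, f x]" "f x" "[]"] by simp
  have ch: "chain ([x, f x] @ Tl f (f x))"
    using sf[of "f (f x)"] by (simp add: Tl_f)
  have r: "chain ([x, f x] @ Tl g (f x))"
     "J (\<lambda>p. pser ([x, f x] @ Tl f (f x)) p - c (f x) * pser ([x, f x] @ Tl g (f x)) p)"
    using RR_D0[OF rr ch] by auto
  have e: "[x, f x] @ Tl g (f x) = [] @ A x @ map (\<lambda>k. (g ^^ k) (f x)) [2..<n (f x)]"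
    by (simp add: Tl_g_cons A_def)
  have "ZJ (pser ([] @ A x @ map (\<lambda>k. (g ^^ k) (f x)) [2..<n (f x)]))"
    using AZ[rule_format, of "[]" x "map (\<lambda>k. (g ^^ k) (f x)) [2..<n (f x)]"] r(1) unfolding e by blast
  then have "ZJ (pser ([x, f x] @ Tl g (f x)))" unfolding e .
  from ZJ_transfer[OF r(2) this] show ?thesis by (simp add: Tl_f)
qed

lemma caseB:
  assumes AZ: "\<forall>a U V. chain (U @ A a @ V) \<longrightarrow> ZJ (pser (U @ A a @ V))"
    and ch: "chain [x, g x, f (g x), f (f (g x))]"
  shows "ZJ (pser [x, g x, f (g x), f (f (g x))])"
proof -
  define \<gamma> where "\<gamma> = f (f (g x))"
  have "RR ([] @ B x @ [\<gamma>]) ([] @ (A x @ map (\<lambda>k. (g ^^ k) \<gamma>) [3..<n \<gamma>]) @ [\<gamma>]) (c \<gamma>)"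
    by (rule RR_ctx) (use stepB[of x] in \<open>simp add: \<gamma>_def\<close>)
  moreover have ch': "chain ([] @ ([] @ B x @ [\<gamma>]) @ [])" using ch by (simp add: B_def \<gamma>_def)
  ultimately have r: "chain ([] @ ([] @ (A x @ map (\<lambda>k. (g ^^ k) \<gamma>) [3..<n \<gamma>]) @ [\<gamma>]) @ [])"
     "J (\<lambda>p. pser ([] @ ([] @ B x @ [\<gamma>]) @ []) p - c \<gamma> * pser ([] @ ([] @ (A x @ map (\<lambda>k. (g ^^ k) \<gamma>) [3..<n \<gamma>]) @ [\<gamma>]) @ []) p)"
    unfolding RR_def by blast+
  have "ZJ (pser ([] @ A x @ (map (\<lambda>k. (g ^^ k) \<gamma>) [3..<n \<gamma>] @ [\<gamma>])))"
    using AZ[rule_format, of "[]" x "map (\<lambda>k. (g ^^ k) \<gamma>) [3..<n \<gamma>] @ [\<gamma>]"] r(1) by simp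
  then have "ZJ (pser ([] @ ([] @ (A x @ map (\<lambda>k. (g ^^ k) \<gamma>) [3..<n \<gamma>]) @ [\<gamma>]) @ []))" by simp
  from ZJ_transfer[OF r(2) this] show ?thesis by (simp add: B_def \<gamma>_def)
qed

lemma ZJ0: "ZJ (\<lambda>_. 0)" using ZJ_of_J[OF J0] .

lemma final_from_AZ:
  assumes AZ: "\<forall>a U V. chain (U @ A a @ V) \<longrightarrow> ZJ (pser (U @ A a @ V))"
  shows "ZJ (ser_mult s t (path_ser (arrows_path s [al])) (path_ser (arrows_path s [be, f be, f (f be)])))
       \<and> ZJ (ser_mult s t (path_ser (arrows_path s [be, f be, f (f be)])) (path_ser (arrows_path s [al])))"
proof
  have vA: "valid_path s t (s al, [al])" by (simp add: valid_path_def)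
  have tffb: "t (f (f be)) = s be" using sf[of "f (f be)"] by simp
  have vZ: "valid_path s t (s be, [be, f be, f (f be)])" by (simp add: valid_path_def)
  show "ZJ (ser_mult s t (path_ser (arrows_path s [al])) (path_ser (arrows_path s [be, f be, f (f be)])))"
  proof (cases "t al = s be")
    case False
    have "ser_mult s t (path_ser (arrows_path s [al])) (path_ser (arrows_path s [be, f be, f (f be)])) = (\<lambda>_. 0::'k)"
      unfolding arrows_path_def by (rule ser_mult_path_ser_zero) (use False in \<open>simp add: path_end_def\<close>)
    then show ?thesis using ZJ0 by simp
  next
    case True
    have prod: "ser_mult s t (path_ser (arrows_path s [al])) (path_ser (arrows_path s [be, f be, f (f be)]))
        = pser [al, be, f be, f (f be)]"
      using ser_mult_path_ser[OF vA vZ] True by (simp add: arrows_path_def path_end_def)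
    from out_cases[OF True[symmetric]] show ?thesis
    proof
      assume "be = f al"
      then show ?thesis using prod caseA[OF AZ, of al] by simp
    next
      assume b: "be = g al"
      have "chain [al, g al, f (g al), f (f (g al))]" by simp
      then show ?thesis using prod caseB[OF AZ] b by simp
    qed
  qed
  show "ZJ (ser_mult s t (path_ser (arrows_path s [be, f be, f (f be)])) (path_ser (arrows_path s [al])))"
  proof (cases "s al = s be")
    case False
    have "ser_mult s t (path_ser (arrows_path s [be, f be, f (f be)])) (path_ser (arrows_path s [al])) = (\<lambda>_. 0::'k)"
      unfolding arrows_path_def by (rule ser_mult_path_ser_zero) (use False tffb in \<open>simp add: path_end_def\<close>)
    then show ?thesis using ZJ0 by simp
  next
    case True
    have prod: "ser_mult s t (path_ser (arrows_path s [be, f be, f (f be)])) (path_ser (arrows_path s [al]))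
        = pser [be, f be, f (f be), al]"
      using ser_mult_path_ser[OF vZ vA] True tffb by (simp add: arrows_path_def path_end_def)
    have "s al = t (f (f be))" using True tffb by simp
    from out_cases[OF this] show ?thesis
    proof
      assume "al = f (f (f be))"
      then show ?thesis using prod caseA[OF AZ, of be] by simp
    next
      assume b: "al = g (f (f be))"
      have "chain ([be] @ A (f be) @ [])" using True tffb b by (simp add: A_def)
      then have "ZJ (pser ([be] @ A (f be) @ []))" using AZ by blast
      then show ?thesis using prod b by (simp add: A_def)
    qed
  qed
qed

end

locale QSD = QS +
  assumes dia: "\<forall>a. orb_size g a = 3"
begin

lemma R1: "g (g (g x)) = x"
proof -
  have "(g ^^ 3) x = x" using per_g(2)[of x] dia by simp
  then show ?thesis by (simp add: numeral_3_eq_3)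
qed

lemma h_fpf: "g (f (f y)) \<noteq> y"
  using f_neq_g[of "f (f y)"] by simp

lemma hh: "g (f (f (g (f (f y))))) = y"
proof -
  define x' where "x' = g (f (f y))"
  define w where "w = f (f x')"
  have fw: "f w = x'" by (simp add: w_def)
  have "s y = t w"
  proof -
    have "t w = s (f w)" by simp
    also have "\<dots> = s x'" by (simp add: fw)
    also have "\<dots> = s y" using sf[of "f (f y)"] by (simp add: x'_def)
    finally show ?thesis by simp
  qed
  then have "y = f w \<or> y = g w" by (rule out_cases)
  moreover have "y \<noteq> f w" using h_fpf[of y] fw x'_def by metis
  ultimately show ?thesis by (simp add: w_def x'_def)
qed

lemma R2: "g (f (f x)) = f (g (g x))"
  using hh[of "f (g (g x))"] by (simp add: R1)

lemma R3: "g (g (f x)) = f (f (g x))"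
proof -
  have "f (g (g (f y))) = g y" for y using R2[of "f y"] by simp
  from this[of x] have "f (f (f (g (g (f x))))) = f (f (g x))" by simp
  then show ?thesis by simp
qed

lemma R4: "g (f (g x)) = f (g (f x))"
proof -
  have "f (f (g (f (g x)))) = g (g (f (f (g x))))" using R3[of "f (g x)"] by simp
  also have "g (f (f (g x))) = f x" using R2[of "g x"] by (simp add: R1)
  finally have "f (f (g (f (g x)))) = g (f x)" by simp
  then have "f (f (f (g (f (g x))))) = f (g (f x))" by simp
  then show ?thesis by simp
qed

lemmas nfr = R1 R2 R3 R4

lemma fpf_f: "f x \<noteq> x" using st_neq[of x] sf[of x] by metis
lemma fpf_ff: "f (f x) \<noteq> x" using fpf_f[of x] fff[of x] by metis
lemma fpf_g: "g x \<noteq> x" using st_neq[of x] sg[of x] by metis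
lemma fpf_gg: "g (g x) \<noteq> x" using fpf_g[of "g x"] R1[of x] by metis
lemma fpf_h: "f (g (g x)) \<noteq> x" using h_fpf[of x] R2[of x] by simp

lemma dist_1_2_0: "f (f a) \<noteq> f (g (f a))"
proof
  assume "f (f a) = f (g (f a))"
  then have "f (f (g ((f (f a))))) = f (f (g ((f (g (f a))))))" by (simp only:)
  then have e: "g (g a) = f (g (g a))" by (simp add: nfr)
  have "f (g (g a)) \<noteq> g (g a)" using fpf_f[of "g (g a)"] by (simp add: nfr)
  then show False using e by simp
qed

lemma dist_1_2_1: "f (f a) \<noteq> g (f (g (f a)))"
proof
  assume "f (f a) = g (f (g (f a)))"
  then have "g (g ((f (f a)))) = g (g ((g (f (g (f a))))))" by (simp only:)
  then have e: "f (f (g (f a))) = f (g (f a))" by (simp add: nfr)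
  have "f (g (f a)) \<noteq> f (f (g (f a)))" using fpf_ff[of "f (f (g (f a)))"] by (simp add: nfr)
  then show False using e by simp
qed

lemma dist_1_2_2: "f (f a) \<noteq> g (g (f (g (f a))))"
proof
  assume "f (f a) = g (g (f (g (f a))))"
  then have "f (f ((f (f a)))) = f (f ((g (g (f (g (f a)))))))" by (simp only:)
  then have e: "f a = g a" by (simp add: nfr)
  have "g a \<noteq> f a" using fpf_h[of "f a"] by (simp add: nfr)
  then show False using e by simp
qed

lemma dist_1_3_0: "f (f a) \<noteq> g (g a)"
proof
  assume "f (f a) = g (g a)"
  then have "f ((f (f a))) = f ((g (g a)))" by (simp only:)
  then have e: "a = f (g (g a))" by (simp add: nfr)
  have "f (g (g a)) \<noteq> a" using fpf_h[of "a"] by (simp add: nfr)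
  then show False using e by simp
qed

lemma dist_1_3_1: "f (f a) \<noteq> g (g (g a))"
proof
  assume "f (f a) = g (g (g a))"
  then have "f ((f (f a))) = f ((g (g (g a))))" by (simp only:)
  then have e: "a = f a" by (simp add: nfr)
  have "f a \<noteq> a" using fpf_f[of "a"] by (simp add: nfr)
  then show False using e by simp
qed

lemma dist_1_3_2: "f (f a) \<noteq> g (g (g (g a)))"
proof
  assume "f (f a) = g (g (g (g a)))"
  then have "f (f (g ((f (f a))))) = f (f (g ((g (g (g (g a)))))))" by (simp only:)
  then have e: "g (g a) = f (f (g (g a)))" by (simp add: nfr)
  have "f (f (g (g a))) \<noteq> g (g a)" using fpf_ff[of "g (g a)"] by (simp add: nfr)
  then show False using e by simp
qed

lemma dist_1_4_0: "f (f a) \<noteq> f (f (g a))"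
proof
  assume "f (f a) = f (f (g a))"
  then have "g (g ((f (f a)))) = g (g ((f (f (g a)))))" by (simp only:)
  then have e: "f (f (g (f a))) = g (f a)" by (simp add: nfr)
  have "g (f a) \<noteq> f (f (g (f a)))" using fpf_f[of "f (f (g (f a)))"] by (simp add: nfr)
  then show False using e by simp
qed

lemma dist_1_4_1: "f (f a) \<noteq> g (f (f (g a)))"
proof
  assume "f (f a) = g (f (f (g a)))"
  then have "f ((f (f a))) = f ((g (f (f (g a)))))" by (simp only:)
  then have e: "a = f (f a)" by (simp add: nfr)
  have "f (f a) \<noteq> a" using fpf_ff[of "a"] by (simp add: nfr)
  then show False using e by simp
qed

lemma dist_1_4_2: "f (f a) \<noteq> g (g (f (f (g a))))"
proof
  assume "f (f a) = g (g (f (f (g a))))"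
  then have "(f (f a)) = (g (g (f (f (g a)))))" by (simp only:)
  then have e: "f (f a) = g (f a)" by (simp add: nfr)
  have "g (f a) \<noteq> f (f a)" using fpf_h[of "f (f a)"] by (simp add: nfr)
  then show False using e by simp
qed

lemma dist_2_3_0: "f (g (f a)) \<noteq> g (g a)"
proof
  assume "f (g (f a)) = g (g a)"
  then have "f (f (g (g ((f (g (f a))))))) = f (f (g (g ((g (g a))))))" by (simp only:)
  then have e: "g a = f (f (g a))" by (simp add: nfr)
  have "f (f (g a)) \<noteq> g a" using fpf_ff[of "g a"] by (simp add: nfr)
  then show False using e by simp
qed

lemma dist_2_3_1: "f (g (f a)) \<noteq> g (g (g a))"
proof
  assume "f (g (f a)) = g (g (g a))"
  then have "g (f ((f (g (f a))))) = g (f ((g (g (g a)))))" by (simp only:)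
  then have e: "f (f a) = g (f a)" by (simp add: nfr)
  have "g (f a) \<noteq> f (f a)" using fpf_h[of "f (f a)"] by (simp add: nfr)
  then show False using e by simp
qed

lemma dist_2_3_2: "f (g (f a)) \<noteq> g (g (g (g a)))"
proof
  assume "f (g (f a)) = g (g (g (g a)))"
  then have "f (g ((f (g (f a))))) = f (g ((g (g (g (g a))))))" by (simp only:)
  then have e: "g (g a) = f (g (g a))" by (simp add: nfr)
  have "f (g (g a)) \<noteq> g (g a)" using fpf_f[of "g (g a)"] by (simp add: nfr)
  then show False using e by simp
qed

lemma dist_2_4_0: "f (g (f a)) \<noteq> f (f (g a))"
proof
  assume "f (g (f a)) = f (f (g a))"
  then have "f (g (f ((f (g (f a)))))) = f (g (f ((f (f (g a))))))" by (simp only:)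
  then have e: "a = f (g (g a))" by (simp add: nfr)
  have "f (g (g a)) \<noteq> a" using fpf_h[of "a"] by (simp add: nfr)
  then show False using e by simp
qed

lemma dist_2_4_1: "f (g (f a)) \<noteq> g (f (f (g a)))"
proof
  assume "f (g (f a)) = g (f (f (g a)))"
  then have "f (f (g (g ((f (g (f a))))))) = f (f (g (g ((g (f (f (g a))))))))" by (simp only:)
  then have e: "g a = f (g a)" by (simp add: nfr)
  have "f (g a) \<noteq> g a" using fpf_f[of "g a"] by (simp add: nfr)
  then show False using e by simp
qed

lemma dist_2_4_2: "f (g (f a)) \<noteq> g (g (f (f (g a))))"
proof
  assume "f (g (f a)) = g (g (f (f (g a))))"
  then have "f ((f (g (f a)))) = f ((g (g (f (f (g a))))))" by (simp only:)
  then have e: "f (f (g (f a))) = f (g (f a))" by (simp add: nfr)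
  have "f (g (f a)) \<noteq> f (f (g (f a)))" using fpf_ff[of "f (f (g (f a)))"] by (simp add: nfr)
  then show False using e by simp
qed

lemma dist_3_4_0: "g (g a) \<noteq> f (f (g a))"
proof
  assume "g (g a) = f (f (g a))"
  then have "g ((g (g a))) = g ((f (f (g a))))" by (simp only:)
  then have e: "a = f a" by (simp add: nfr)
  have "f a \<noteq> a" using fpf_f[of "a"] by (simp add: nfr)
  then show False using e by simp
qed

lemma dist_3_4_1: "g (g a) \<noteq> g (f (f (g a)))"
proof
  assume "g (g a) = g (f (f (g a)))"
  then have "g (g ((g (g a)))) = g (g ((g (f (f (g a))))))" by (simp only:)
  then have e: "g a = f (f (g a))" by (simp add: nfr)
  have "f (f (g a)) \<noteq> g a" using fpf_ff[of "g a"] by (simp add: nfr)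
  then show False using e by simp
qed

lemma dist_3_4_2: "g (g a) \<noteq> g (g (f (f (g a))))"
proof
  assume "g (g a) = g (g (f (f (g a))))"
  then have "f (g ((g (g a)))) = f (g ((g (g (f (f (g a)))))))" by (simp only:)
  then have e: "f a = g a" by (simp add: nfr)
  have "g a \<noteq> f a" using fpf_h[of "f a"] by (simp add: nfr)
  then show False using e by simp
qed

lemma orbit3: "orbit_of g x = {x, g x, g (g x)}"
proof -
  have "{..<3::nat} = {0, 1, 2}" by auto
  then show ?thesis using per_g(4)[of x] dia by (simp add: numeral_2_eq_2)
qed

definition SS where "SS a = orbit_of g (f (f a)) \<union> orbit_of g (f (g (f a))) \<union> orbit_of g (g (g a)) \<union> orbit_of g (f (f (g a)))"

lemma SS_ff: "x \<in> SS a \<Longrightarrow> f (f x) \<in> SS a"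
  unfolding SS_def orbit3 by (auto simp: nfr)

lemma SS_g: "x \<in> SS a \<Longrightarrow> g x \<in> SS a"
  unfolding SS_def orbit3 by (auto simp: nfr)

lemma SS_f: "x \<in> SS a \<Longrightarrow> f x \<in> SS a"
  using SS_ff[OF SS_ff[of x a]] by simp

lemma SS_src: assumes "x \<in> SS a" "s b = s x" shows "b \<in> SS a"
proof -
  have "s b = t (f (f x))" using assms(2) sf[of "f (f x)"] by simp
  then have "b = f (f (f x)) \<or> b = g (f (f x))" by (rule out_cases)
  then show ?thesis using assms(1) SS_ff SS_g by auto
qed

lemma SS_tgt: assumes "x \<in> SS a" "t b = s x" shows "b \<in> SS a"
proof -
  have "x = f b \<or> x = g b" using out_cases[of x b] assms(2) by simp
  then show ?thesis
  proof
    assume "x = f b" then have "b = f (f x)" by simp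
    then show ?thesis using SS_ff[OF assms(1)] by simp
  next
    assume "x = g b" then have "b = g (g x)" using R1 by simp
    then show ?thesis using SS_g[OF SS_g[OF assms(1)]] by simp
  qed
qed

lemma SS_all: "b \<in> SS a"
proof -
  define VS where "VS = s ` SS a"
  have p1: "f (f a) \<in> SS a" unfolding SS_def orbit3 by simp
  have conn: "(s (f (f a)), s b) \<in> ({(s x, t x) | x. True} \<union> {(t x, s x) | x. True})\<^sup>*"
    using setting by (simp add: quiver_setting_def)
  have "s b \<in> VS"
    using conn
  proof (induction rule: rtrancl_induct)
    case base
    show ?case unfolding VS_def by (rule imageI[OF p1])
  next
    case (step y z)
    from step.hyps(2) show ?case
    proof
      assume "(y, z) \<in> {(s x, t x) | x. True}"
      then obtain x where xy: "y = s x" "z = t x" by blast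
      obtain w where w: "w \<in> SS a" "y = s w" using step.IH by (auto simp: VS_def)
      have "x \<in> SS a" using SS_src[OF w(1), of x] xy w by simp
      then have "f x \<in> SS a" by (rule SS_f)
      then show ?thesis using xy by (force simp: VS_def)
    next
      assume "(y, z) \<in> {(t x, s x) | x. True}"
      then obtain x where xy: "y = t x" "z = s x" by blast
      obtain w where w: "w \<in> SS a" "y = s w" using step.IH by (auto simp: VS_def)
      have "x \<in> SS a" using SS_tgt[OF w(1), of x] xy w by simp
      then show ?thesis using xy by (simp add: VS_def)
    qed
  qed
  then obtain w where "w \<in> SS a" "s b = s w" by (auto simp: VS_def)
  then show ?thesis using SS_src by blast
qed

lemma notin_orbit: assumes "x \<noteq> y" "x \<noteq> g y" "x \<noteq> g (g y)" shows "x \<notin> orbit_of g y"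
  using assms by (simp add: orbit3)

lemma prod_Rg: "(\<Prod>r\<in>Rg. c r) = c (f (f a)) * c (f (g (f a))) * c (g (g a)) * c (f (f (g a)))"
proof -
  define p1 where "p1 = f (f a)"
  define p2 where "p2 = f (g (f a))"
  define p3 where "p3 = g (g a)"
  define p4 where "p4 = f (f (g a))"
  have rep: "\<exists>r. r \<in> Rg \<and> r \<in> orbit_of g p \<and> (\<forall>r'. r' \<in> Rg \<and> r' \<in> orbit_of g p \<longrightarrow> r' = r)" for p
    using reps_g unfolding orbit_reps_def by metis
  obtain r1 where r1: "r1 \<in> Rg" "r1 \<in> orbit_of g p1" "\<forall>r'. r' \<in> Rg \<and> r' \<in> orbit_of g p1 \<longrightarrow> r' = r1" using rep by blast
  obtain r2 where r2: "r2 \<in> Rg" "r2 \<in> orbit_of g p2" "\<forall>r'. r' \<in> Rg \<and> r' \<in> orbit_of g p2 \<longrightarrow> r' = r2" using rep by blast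
  obtain r3 where r3: "r3 \<in> Rg" "r3 \<in> orbit_of g p3" "\<forall>r'. r' \<in> Rg \<and> r' \<in> orbit_of g p3 \<longrightarrow> r' = r3" using rep by blast
  obtain r4 where r4: "r4 \<in> Rg" "r4 \<in> orbit_of g p4" "\<forall>r'. r' \<in> Rg \<and> r' \<in> orbit_of g p4 \<longrightarrow> r' = r4" using rep by blast
  have n12: "p1 \<notin> orbit_of g p2" unfolding p1_def p2_def by (rule notin_orbit) (rule dist_1_2_0 dist_1_2_1 dist_1_2_2)+
  have n13: "p1 \<notin> orbit_of g p3" unfolding p1_def p3_def by (rule notin_orbit) (rule dist_1_3_0 dist_1_3_1 dist_1_3_2)+
  have n14: "p1 \<notin> orbit_of g p4" unfolding p1_def p4_def by (rule notin_orbit) (rule dist_1_4_0 dist_1_4_1 dist_1_4_2)+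
  have n23: "p2 \<notin> orbit_of g p3" unfolding p2_def p3_def by (rule notin_orbit) (rule dist_2_3_0 dist_2_3_1 dist_2_3_2)+
  have n24: "p2 \<notin> orbit_of g p4" unfolding p2_def p4_def by (rule notin_orbit) (rule dist_2_4_0 dist_2_4_1 dist_2_4_2)+
  have n34: "p3 \<notin> orbit_of g p4" unfolding p3_def p4_def by (rule notin_orbit) (rule dist_3_4_0 dist_3_4_1 dist_3_4_2)+
  have self: "p \<in> orbit_of g p" for p using funpow_in_orbit_of[where h=g and k=0 and a=p] by simp
  have ne: "r \<in> orbit_of g p \<Longrightarrow> r \<in> orbit_of g q \<Longrightarrow> p \<in> orbit_of g q" for r p q
    using orbit_same[OF injg] self by metis
  have d: "r1 \<noteq> r2" "r1 \<noteq> r3" "r1 \<noteq> r4" "r2 \<noteq> r3" "r2 \<noteq> r4" "r3 \<noteq> r4"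
    using ne[OF r1(2)] ne[OF r2(2)] ne[OF r3(2)] r2(2) r3(2) r4(2) n12 n13 n14 n23 n24 n34 by auto
  have cover: "x \<in> orbit_of g p1 \<or> x \<in> orbit_of g p2 \<or> x \<in> orbit_of g p3 \<or> x \<in> orbit_of g p4" for x
    using SS_all[of x a] unfolding SS_def p1_def p2_def p3_def p4_def by blast
  have Rg: "Rg = {r1, r2, r3, r4}"
  proof
    show "Rg \<subseteq> {r1, r2, r3, r4}"
    proof
      fix r assume "r \<in> Rg"
      then show "r \<in> {r1, r2, r3, r4}"
        using cover[of r] r1(3)[rule_format, of r] r2(3)[rule_format, of r] r3(3)[rule_format, of r] r4(3)[rule_format, of r]
        by auto
    qed
    show "{r1, r2, r3, r4} \<subseteq> Rg" using r1(1) r2(1) r3(1) r4(1) by simp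
  qed
  have cs: "c r1 = c p1" "c r2 = c p2" "c r3 = c p3" "c r4 = c p4"
    using c_orb[OF r1(2)] c_orb[OF r2(2)] c_orb[OF r3(2)] c_orb[OF r4(2)] by auto
  show ?thesis unfolding Rg using d cs by (simp add: p1_def p2_def p3_def p4_def mult.assoc)
qed

lemma dia_step: "RR (A a) (A (g (f (f a)))) (c (f (f a)) * c (f (f (g (g (f (f a)))))))"
proof -
  have m: "n (f (f a)) = 3" using dia by simp
  have "n (f (f (g ((g ^^ (n (f (f a)) - 2)) (f (f a)))))) = 3" using dia by simp
  then show ?thesis using stepAA[of a] m by (simp add: numeral_3_eq_3)
qed

lemma dia_cycle: "RR (A a) (A a) (c (f (f a)) * c (f (g (f a))) * c (g (g a)) * c (f (f (g a))))"
proof -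
  have 1: "RR (A a) (A (g (f (f a)))) (c (f (f a)) * c (f (f (g (g (f (f a)))))))" by (rule dia_step)
  have 2: "RR (A (g (f (f a)))) (A (g (f (f (g (f (f a))))))) (c (f (f (g (f (f a))))) * c (f (f (g (g (f (f (g (f (f a))))))))))"
    by (rule dia_step)
  have "RR (A a) (A a) ((c (f (f a)) * c (f (f (g (g (f (f a))))))) * (c (f (f (g (f (f a))))) * c (f (f (g (g (f (f (g (f (f a)))))))))))"
    using RR_trans[OF 1 2] hh[of a] by simp
  then show ?thesis by (simp add: nfr mult_ac)
qed

lemma AZ_dia:
  assumes "(\<Prod>r\<in>Rg. c r) \<noteq> 1"
  shows "\<forall>a U V. chain (U @ A a @ V) \<longrightarrow> ZJ (pser (U @ A a @ V))"
proof (intro allI impI)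
  fix a U V assume ch: "chain (U @ A a @ V)"
  have "RR (A a) (A a) (\<Prod>r\<in>Rg. c r)" using dia_cycle[of a] prod_Rg[of a] by simp
  then show "ZJ (pser (U @ A a @ V))" using AZ_cycle[OF _ assms ch] by blast
qed

end

theorem lemma4p6:
  fixes s t :: "'a::finite \<Rightarrow> 'v::finite"
    and f g :: "'a \<Rightarrow> 'a"
    and c :: "'a \<Rightarrow> 'k::field"
    and Rf Rg :: "'a set"
  assumes setting: "quiver_setting s t f g c"
    and reps_f: "orbit_reps f Rf"
    and reps_g: "orbit_reps g Rg"
    and cond: "(\<forall>a. orb_size g a \<ge> 4 \<or> orb_size g (f a) \<ge> 4)
             \<or> ((\<forall>a. orb_size g a = 3) \<and> (\<Prod>a\<in>Rg. c a) \<noteq> 1)"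
  shows "\<forall>(i::'v) (al::'a) (be::'a). s be = i \<longrightarrow>
           (let W = potential s f g c Rf Rg;
                arr = path_ser (arrows_path s [al]);
                z = path_ser (arrows_path s [be, f be, f (f be)])
            in zero_in_jacobian s t W (ser_mult s t arr z)
             \<and> zero_in_jacobian s t W (ser_mult s t z arr))"
proof -
  interpret QS s t f g c Rf Rg
    using setting reps_f reps_g by unfold_locales
  have AZ: "\<forall>a U V. chain (U @ A a @ V) \<longrightarrow> ZJ (pser (U @ A a @ V))"
  proof (cases "\<forall>a. orb_size g a \<ge> 4 \<or> orb_size g (f a) \<ge> 4")
    case True
    then show ?thesis using AZ_star by blast
  next
    case False
    then have dia: "\<forall>a. orb_size g a = 3" and pr: "(\<Prod>a\<in>Rg. c a) \<noteq> 1" using cond by auto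
    interpret QSD s t f g c Rf Rg
      by unfold_locales (rule dia)
    show ?thesis using AZ_dia[OF pr] .
  qed
  show ?thesis using final_from_AZ[OF AZ] by (simp add: Let_def)
qed

end
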